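(* Let $\mu$ be a purely atomic positive $\sigma$-finite measure on $(\Omega,\mathcal B)$ whose range $\{\mu(A):A\in\mathcal B\}$ is an interval, and such that for every $\varepsilon>0$, $\mu\big(\bigcup\{A_n: A_n\text{ an atom},\ \mu(A_n)>\varepsilon\}\big)<\infty$. Then for every $t<\mu(\Omega)$ there is a set $C\in\mathcal B$ with $\mu(C)\ge t$ such that the range of the restriction $\mu|_C$ is a finite interval.
   Context: An atom of $\mu$ is a set $A$ with $\mu(A)>0$ such that each measurable subset of $A$ has measure $0$ or $\mu(A)$; $\mu$ is purely atomic if $\Omega$ is, up to a null set, the union of the atoms. $\mu|_C$ denotes $A\mapsto\mu(A\cap C)$. *)

theory Defs
  imports "HOL-Analysis.Analysis"
begin

definition atom :: "'a measure \<Rightarrow> 'a set \<Rightarrow> bool" where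
  "atom M A \<longleftrightarrow> A \<in> sets M \<and> emeasure M A > 0 \<and>
     (\<forall>B \<in> sets M. B \<subseteq> A \<longrightarrow> emeasure M B = 0 \<or> emeasure M B = emeasure M A)"

definition purely_atomic :: "'a measure \<Rightarrow> bool" where
  "purely_atomic M \<longleftrightarrow> (\<exists>N \<in> null_sets M. space M - N \<subseteq> \<Union>{A. atom M A})"

definition order_interval :: "'b::linorder set \<Rightarrow> bool" where
  "order_interval S \<longleftrightarrow> (\<forall>x\<in>S. \<forall>z\<in>S. \<forall>y. x \<le> y \<and> y \<le> z \<longrightarrow> y \<in> S)"

definition measure_range :: "'a measure \<Rightarrow> ennreal set" where
  "measure_range M = emeasure M ` sets M"

definition restr_range :: "'a measure \<Rightarrow> 'a set \<Rightarrow> ennreal set" where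
  "restr_range M C = (\<lambda>A. emeasure M (A \<inter> C)) ` sets M"

end

theory Submission
  imports Defs
begin

lemma pos_fin_sub:
  assumes "sigma_finite_measure M" "W \<in> sets M" "emeasure M W > 0"
  shows "\<exists>Z\<in>sets M. Z \<subseteq> W \<and> 0 < emeasure M Z \<and> emeasure M Z < \<infinity>"
proof (rule ccontr)
  assume nz: "\<not> ?thesis"
  obtain A where A: "countable A" "A \<subseteq> sets M" "\<Union>A = space M" "\<forall>a\<in>A. emeasure M a \<noteq> \<infinity>"
    using sigma_finite_measure.sigma_finite_countable[OF assms(1)] by blast
  have "\<forall>a\<in>A. W \<inter> a \<in> null_sets M"
  proof
    fix a assume a: "a \<in> A"
    have s: "W \<inter> a \<in> sets M" using a A assms(2) by auto
    have le: "emeasure M (W \<inter> a) \<le> emeasure M a" using s a A by (intro emeasure_mono) auto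
    have "emeasure M a < \<infinity>" using A a by (simp add: less_top)
    then have f: "emeasure M (W \<inter> a) < \<infinity>" using le by (rule le_less_trans[rotated])
    have "\<not> (0 < emeasure M (W \<inter> a))"
    proof
      assume "0 < emeasure M (W \<inter> a)"
      then have "\<exists>Z\<in>sets M. Z \<subseteq> W \<and> 0 < emeasure M Z \<and> emeasure M Z < \<infinity>"
        using s f by blast
      then show False using nz by blast
    qed
    then have "emeasure M (W \<inter> a) = 0" by (simp add: not_less)
    then show "W \<inter> a \<in> null_sets M" using s by blast
  qed
  then have "(\<Union>a\<in>A. W \<inter> a) \<in> null_sets M" using A by (intro null_sets_UN') auto
  moreover have "(\<Union>a\<in>A. W \<inter> a) = W" using A sets.sets_into_space[OF assms(2)] by auto
  ultimately show False using assms(3) by auto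
qed
lemma atom_in:
  assumes H: "\<And>D. D \<in> sets M \<Longrightarrow> D \<subseteq> Z \<Longrightarrow> emeasure M D = 0 \<or> g < emeasure M D"
    and Z: "Z \<in> sets M" "0 < emeasure M Z" "emeasure M Z < \<infinity>" and g: "g > 0"
  shows "\<exists>D. atom M D \<and> D \<subseteq> Z \<and> g < emeasure M D"
proof -
  define S where "S = {D. D \<in> sets M \<and> D \<subseteq> Z \<and> 0 < emeasure M D}"
  define m where "m = Inf (emeasure M ` S)"
  have ZS: "Z \<in> S" using Z by (auto simp: S_def)
  have mZ: "m \<le> emeasure M Z" using ZS unfolding m_def by (intro Inf_lower) auto
  have gm: "g \<le> m" unfolding m_def
  proof (rule Inf_greatest)
    fix x assume "x \<in> emeasure M ` S"
    then obtain D where "D \<in> S" "x = emeasure M D" by auto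
    then show "g \<le> x" using H[of D] by (auto simp: S_def)
  qed
  have m0: "0 < m" using gm g by auto
  have mfin: "m < \<infinity>" using mZ Z by auto
  have "m + 0 < m + m" using m0 mfin by (subst ennreal_add_left_cancel_less) auto
  then have "m < 2 * m" by (simp add: mult_2)
  then have "Inf (emeasure M ` S) < 2 * m" unfolding m_def .
  then obtain D where D: "D \<in> S" "emeasure M D < 2 * m"
    unfolding Inf_less_iff by blast
  have Ds: "D \<in> sets M" "D \<subseteq> Z" "0 < emeasure M D" using D by (auto simp: S_def)
  have Dfin: "emeasure M D < \<infinity>" using Ds Z emeasure_mono[of D Z M] by auto
  have "atom M D"
    unfolding atom_def
  proof (intro conjI ballI impI Ds)
    fix E assume E: "E \<in> sets M" "E \<subseteq> D"
    show "emeasure M E = 0 \<or> emeasure M E = emeasure M D"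
    proof (rule ccontr)
      assume ne: "\<not> ?thesis"
      have le: "emeasure M E \<le> emeasure M D" using E Ds by (intro emeasure_mono) auto
      have lt: "emeasure M E < emeasure M D" using ne le by auto
      have add: "emeasure M D = emeasure M E + emeasure M (D - E)"
      proof -
        have "E \<union> (D - E) = D" using E by auto
        then show ?thesis using E Ds plus_emeasure[of E M "D - E"] by auto
      qed
      have "0 < emeasure M (D - E)" using add lt by (metis add.right_neutral not_gr_zero order.irrefl)
      then have "D - E \<in> S" using E Ds by (auto simp: S_def)
      then have m1: "m \<le> emeasure M (D - E)" unfolding m_def by (intro Inf_lower) auto
      have "E \<in> S" using E Ds ne by (auto simp: S_def zero_less_iff_neq_zero)
      then have m2: "m \<le> emeasure M E" unfolding m_def by (intro Inf_lower) auto
      have "2 * m \<le> emeasure M D" using add m1 m2 by (simp add: mult_2 add_mono)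
      then show False using D by auto
    qed
  qed
  moreover have "g < emeasure M D" using H[of D] Ds by auto
  ultimately show ?thesis using Ds by auto
qed

lemma suminf_lb_top:
  fixes f :: "nat \<Rightarrow> ennreal"
  assumes "c > 0" "\<And>n. c \<le> f n"
  shows "suminf f = \<infinity>"
proof -
  define r where "r = enn2real (min c 1)"
  have r0: "r > 0" using assms(1) unfolding r_def
    by (simp add: enn2real_positive_iff min_less_iff_disj)
  have rc: "ennreal r \<le> c" unfolding r_def
    by (metis ennreal_enn2real_if min.cobounded1 min.cobounded2 ennreal_one_less_top order.trans le_less_trans less_imp_neq zero_le)
  have "(\<Sum>i. ennreal r) = top"
    using r0 by (intro summable_iff_suminf_neq_top) (auto simp: summable_const_iff)
  moreover have "(\<Sum>i. ennreal r) \<le> suminf f"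
    using rc assms(2) by (intro suminf_le) (auto intro: order.trans)
  ultimately show ?thesis by (simp add: top_unique)
qed

lemma small_subset:
  assumes sf: "sigma_finite_measure M"
    and H4: "\<And>\<epsilon> F. \<epsilon> > 0 \<Longrightarrow> countable F \<Longrightarrow> F \<subseteq> {A. atom M A \<and> emeasure M A > \<epsilon>}
           \<Longrightarrow> emeasure M (\<Union>F) < \<infinity>"
    and Y: "Y \<in> sets M" "emeasure M Y = \<infinity>" and g: "g > 0"
  shows "\<exists>D\<in>sets M. D \<subseteq> Y \<and> 0 < emeasure M D \<and> emeasure M D \<le> g"
proof (rule ccontr)
  assume nc: "\<not> ?thesis"
  have H: "emeasure M D = 0 \<or> g < emeasure M D" if "D \<in> sets M" "D \<subseteq> Y" for D
  proof (rule ccontr)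
    assume "\<not> (emeasure M D = 0 \<or> g < emeasure M D)"
    then have "0 < emeasure M D" "emeasure M D \<le> g" by (auto simp: not_less zero_less_iff_neq_zero)
    then show False using nc that by blast
  qed
  have E: "\<exists>A. atom M A \<and> A \<subseteq> Y - U \<and> g < emeasure M A"
    if U: "U \<in> sets M" "emeasure M U < \<infinity>" for U
  proof -
    have YU: "Y - U \<in> sets M" using Y U by auto
    have "emeasure M Y \<le> emeasure M ((Y - U) \<union> U)" using Y U by (intro emeasure_mono) auto
    also have "\<dots> \<le> emeasure M (Y - U) + emeasure M U" using YU U by (intro emeasure_subadditive) auto
    finally have "emeasure M (Y - U) = \<infinity>" using Y U
      by (metis ennreal_add_eq_top infinity_ennreal_def less_top top_unique)
    then have "0 < emeasure M (Y - U)" by simp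
    then obtain Z where Z: "Z \<in> sets M" "Z \<subseteq> Y - U" "0 < emeasure M Z" "emeasure M Z < \<infinity>"
      using pos_fin_sub[OF sf YU] by blast
    have "\<exists>D. atom M D \<and> D \<subseteq> Z \<and> g < emeasure M D"
      using Z g H by (intro atom_in) auto
    then show ?thesis using Z by blast
  qed
  define pick where "pick U = (SOME A. atom M A \<and> A \<subseteq> Y - U \<and> g < emeasure M A)" for U
  define U where "U = rec_nat {} (\<lambda>n V. V \<union> pick V)"
  have U0: "U 0 = {}" and US: "U (Suc n) = U n \<union> pick (U n)" for n by (simp_all add: U_def)
  define A where "A n = pick (U n)" for n
  have P: "U n = (\<Union>k<n. A k) \<and> (\<forall>k<n. atom M (A k) \<and> A k \<subseteq> Y - U k \<and> g < emeasure M (A k))" for n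
  proof (induction n)
    case 0 then show ?case by (simp add: U0)
  next
    case (Suc n)
    have Un: "U n = \<Union>(A ` {..<n})" using Suc by auto
    have sub: "A ` {..<n} \<subseteq> {B. atom M B \<and> emeasure M B > g}" using Suc by auto
    have fin: "emeasure M (U n) < \<infinity>" unfolding Un using sub g by (intro H4) auto
    have Us: "U n \<in> sets M" unfolding Un using sub by (auto simp: atom_def)
    have "atom M (A n) \<and> A n \<subseteq> Y - U n \<and> g < emeasure M (A n)"
      unfolding A_def pick_def by (rule someI_ex) (rule E[OF Us fin])
    then show ?case using Suc by (auto simp: US A_def less_Suc_eq lessThan_Suc)
  qed
  have Aall: "atom M (A n) \<and> A n \<subseteq> Y - U n \<and> g < emeasure M (A n)" for n
    using P[of "Suc n"] by auto
  have disj: "disjoint_family A"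
    unfolding disjoint_family_on_def
  proof (intro ballI impI)
    fix m n :: nat assume "m \<noteq> n"
    then consider "m < n" | "n < m" by linarith
    then show "A m \<inter> A n = {}"
    proof cases
      case 1 then have "A m \<subseteq> U n" using P[of n] by auto
      then show ?thesis using Aall[of n] by auto
    next
      case 2 then have "A n \<subseteq> U m" using P[of m] by auto
      then show ?thesis using Aall[of m] by auto
    qed
  qed
  have sets: "range A \<subseteq> sets M" using Aall by (auto simp: atom_def)
  have "emeasure M (\<Union>(range A)) < \<infinity>" using Aall g by (intro H4) auto
  moreover have "(\<Sum>i. emeasure M (A i)) = emeasure M (\<Union>i. A i)"
    using sets disj by (rule suminf_emeasure)
  moreover have "(\<Sum>i. emeasure M (A i)) = \<infinity>"
    using g Aall by (intro suminf_lb_top[of g]) (auto intro: less_imp_le)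
  ultimately show False by simp
qed

lemma suminf_lb2_top:
  fixes f :: "nat \<Rightarrow> ennreal"
  assumes "c > 0" "\<And>n. c \<le> 2 * f n"
  shows "suminf f = \<infinity>"
proof -
  have "(\<Sum>n. 2 * f n) = \<infinity>" using assms by (rule suminf_lb_top)
  then have "2 * suminf f = \<infinity>" by simp
  then show ?thesis by (simp add: ennreal_mult_eq_top_iff)
qed

lemma realize:
  assumes sf: "sigma_finite_measure M"
    and H4: "\<And>\<epsilon> F. \<epsilon> > 0 \<Longrightarrow> countable F \<Longrightarrow> F \<subseteq> {A. atom M A \<and> emeasure M A > \<epsilon>}
           \<Longrightarrow> emeasure M (\<Union>F) < \<infinity>"
    and X: "X \<in> sets M" "emeasure M X = \<infinity>" and x: "x < \<infinity>"
  shows "\<exists>B\<in>sets M. B \<subseteq> X \<and> emeasure M B = x"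
proof -
  define cand where "cand B D \<longleftrightarrow> D \<in> sets M \<and> D \<subseteq> X - B \<and> emeasure M D \<le> x - emeasure M B" for B D
  define good where "good B D \<longleftrightarrow> cand B D \<and> (\<forall>D'. cand B D' \<longrightarrow> emeasure M D' \<le> 2 * emeasure M D)" for B D
  have ex: "\<exists>D. good B D" for B
  proof -
    define s where "s = Sup (emeasure M ` {D. cand B D})"
    have sx: "s \<le> x" unfolding s_def
      by (rule Sup_least) (auto simp: cand_def intro: order.trans[OF _ diff_le_self_ennreal])
    show ?thesis
    proof (cases "s = 0")
      case True
      have "cand B {}" by (simp add: cand_def)
      moreover have "emeasure M D' \<le> 0" if "cand B D'" for D'
      proof -
        have "emeasure M D' \<le> s" using that unfolding s_def by (intro Sup_upper) auto
        then show ?thesis using True by simp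
      qed
      ultimately show ?thesis unfolding good_def by auto
    next
      case False
      have "s < \<infinity>" using sx x by auto
      then obtain r where r: "s = ennreal r" "r \<ge> 0" by (cases s) auto
      have r0: "r > 0" using False r by (cases "r = 0") auto
      have "ennreal (r/2) < s" using r r0 by (simp add: ennreal_less_iff)
      then obtain D where D: "cand B D" "ennreal (r/2) < emeasure M D"
        unfolding s_def less_Sup_iff by blast
      have "emeasure M D' \<le> 2 * emeasure M D" if "cand B D'" for D'
      proof -
        have "emeasure M D' \<le> s" using that unfolding s_def by (intro Sup_upper) auto
        also have "s = 2 * ennreal (r/2)"
        proof -
          have "ennreal r = ennreal (2 * (r/2))" by simp
          also have "\<dots> = ennreal 2 * ennreal (r/2)" using r0 by (intro ennreal_mult) auto
          finally show ?thesis using r by simp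
        qed
        also have "\<dots> \<le> 2 * emeasure M D" using D by (intro mult_left_mono) auto
        finally show ?thesis .
      qed
      then show ?thesis using D unfolding good_def by auto
    qed
  qed
  define pick where "pick B = (SOME D. good B D)" for B
  have pick: "good B (pick B)" for B unfolding pick_def using ex by (rule someI_ex)
  define Bs where "Bs = rec_nat {} (\<lambda>n V. V \<union> pick V)"
  have B0: "Bs 0 = {}" and BS: "Bs (Suc n) = Bs n \<union> pick (Bs n)" for n by (simp_all add: Bs_def)
  have ok: "Bs n \<in> sets M \<and> Bs n \<subseteq> X \<and> emeasure M (Bs n) \<le> x" for n
  proof (induction n)
    case 0 then show ?case by (simp add: B0)
  next
    case (Suc n)
    have c: "cand (Bs n) (pick (Bs n))" using pick[of "Bs n"] unfolding good_def by (rule conjunct1)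
    then have ps: "pick (Bs n) \<in> sets M" "pick (Bs n) \<subseteq> X - Bs n"
        "emeasure M (pick (Bs n)) \<le> x - emeasure M (Bs n)" unfolding cand_def by auto
    have "emeasure M (Bs (Suc n)) = emeasure M (Bs n) + emeasure M (pick (Bs n))"
      unfolding BS using Suc ps by (intro plus_emeasure[symmetric]) auto
    also have "\<dots> \<le> emeasure M (Bs n) + (x - emeasure M (Bs n))" using ps by (intro add_left_mono) auto
    also have "\<dots> = x" using Suc by (simp add: add_diff_self_ennreal)
    finally show ?case using Suc ps by (auto simp: BS)
  qed
  define d where "d n = pick (Bs n)" for n
  have inc: "incseq Bs" by (rule incseq_SucI) (simp add: BS)
  have Bsets: "range Bs \<subseteq> sets M" using ok by auto
  define B where "B = (\<Union>n. Bs n)"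
  have Bs_sets: "B \<in> sets M" unfolding B_def using Bsets by auto
  have BX: "B \<subseteq> X" unfolding B_def using ok by auto
  have muB: "emeasure M B = (SUP n. emeasure M (Bs n))"
    unfolding B_def by (rule SUP_emeasure_incseq[OF Bsets inc, symmetric])
  have Bx: "emeasure M B \<le> x" unfolding muB using ok by (intro SUP_least) auto
  have dd: "d n \<in> sets M" "d n \<inter> Bs n = {}" "Bs (Suc n) = Bs n \<union> d n" for n
  proof -
    have "cand (Bs n) (d n)" using pick[of "Bs n"] unfolding good_def d_def by (rule conjunct1)
    then show "d n \<in> sets M" "d n \<inter> Bs n = {}" unfolding cand_def by auto
    show "Bs (Suc n) = Bs n \<union> d n" by (simp add: BS d_def)
  qed
  have Bs_eq: "Bs n = (\<Union>k<n. d k)" for n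
    by (induction n) (auto simp: B0 dd(3) lessThan_Suc)
  have disj: "disjoint_family d"
    unfolding disjoint_family_on_def
  proof (intro ballI impI)
    fix m n :: nat assume "m \<noteq> n"
    then consider "m < n" | "n < m" by linarith
    then show "d m \<inter> d n = {}"
    proof cases
      case 1 then have "d m \<subseteq> Bs n" using Bs_eq[of n] by auto
      then show ?thesis using dd(2)[of n] by auto
    next
      case 2 then have "d n \<subseteq> Bs m" using Bs_eq[of m] by auto
      then show ?thesis using dd(2)[of m] by auto
    qed
  qed
  have Bd: "B = (\<Union>n. d n)" unfolding B_def using Bs_eq by auto
  have sumd: "(\<Sum>n. emeasure M (d n)) = emeasure M B"
    unfolding Bd using dd(1) disj by (intro suminf_emeasure) auto
  show ?thesis
  proof (cases "emeasure M B = x")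
    case True then show ?thesis using Bs_sets BX by blast
  next
    case False
    then have lt: "emeasure M B < x" using Bx by auto
    have Bfin: "emeasure M B < \<infinity>" using lt x by auto
    have XB: "X - B \<in> sets M" using X Bs_sets by auto
    have "emeasure M X \<le> emeasure M ((X - B) \<union> B)" using X Bs_sets by (intro emeasure_mono) auto
    also have "\<dots> \<le> emeasure M (X - B) + emeasure M B" using XB Bs_sets by (intro emeasure_subadditive) auto
    finally have le: "\<infinity> \<le> emeasure M (X - B) + emeasure M B" using X by simp
    have XBinf: "emeasure M (X - B) = \<infinity>"
    proof (rule ccontr)
      assume "emeasure M (X - B) \<noteq> \<infinity>"
      then have "emeasure M (X - B) + emeasure M B \<noteq> \<infinity>" using Bfin by (simp add: ennreal_add_eq_top)
      then show False using le by (simp add: top_unique)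
    qed
    have g: "x - emeasure M B > 0" using lt by (rule diff_gr0_ennreal)
    have "\<exists>D\<in>sets M. D \<subseteq> X - B \<and> 0 < emeasure M D \<and> emeasure M D \<le> x - emeasure M B"
      by (rule small_subset[OF sf H4 XB XBinf g])
    then obtain D0 where D0s: "D0 \<in> sets M"
        and D0p: "D0 \<subseteq> X - B \<and> 0 < emeasure M D0 \<and> emeasure M D0 \<le> x - emeasure M B"
      by (rule bexE)
    have D0: "D0 \<in> sets M" "D0 \<subseteq> X - B" "0 < emeasure M D0" "emeasure M D0 \<le> x - emeasure M B"
      using D0s D0p by simp_all
    have "emeasure M D0 \<le> 2 * emeasure M (d n)" for n
    proof -
      have "Bs n \<subseteq> B" unfolding B_def by auto
      then have "emeasure M (Bs n) \<le> emeasure M B" using Bs_sets by (intro emeasure_mono) auto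
      then have "x - emeasure M B \<le> x - emeasure M (Bs n)" by (intro ennreal_minus_mono) auto
      then have "cand (Bs n) D0" using D0 \<open>Bs n \<subseteq> B\<close> unfolding cand_def by auto
      moreover have "\<forall>D'. cand (Bs n) D' \<longrightarrow> emeasure M D' \<le> 2 * emeasure M (d n)"
        using pick[of "Bs n"] unfolding good_def d_def by (rule conjunct2)
      ultimately show ?thesis by blast
    qed
    then have "(\<Sum>n. emeasure M (d n)) = \<infinity>" using D0(3) by (intro suminf_lb2_top[of "emeasure M D0"]) auto
    then show ?thesis using sumd Bfin by simp
  qed
qed

lemma floor_digit:
  fixes w :: real
  shows "\<lfloor>2*w\<rfloor> - 2*\<lfloor>w\<rfloor> = 0 \<or> \<lfloor>2*w\<rfloor> - 2*\<lfloor>w\<rfloor> = 1"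
proof -
  have a: "2*\<lfloor>w\<rfloor> \<le> \<lfloor>2*w\<rfloor>" by (subst le_floor_iff) simp
  have b: "\<lfloor>2*w\<rfloor> < 2*\<lfloor>w\<rfloor> + 2"
  proof (subst floor_less_iff)
    show "2 * w < real_of_int (2 * \<lfloor>w\<rfloor> + 2)" using real_of_int_floor_add_one_gt[of w] by linarith
  qed
  show ?thesis using a b by linarith
qed

lemma binary_sums:
  fixes z :: real
  assumes z: "0 \<le> z" "z < 1"
  defines "dig k \<equiv> \<lfloor>2^Suc k * z\<rfloor> - 2*\<lfloor>2^k * z\<rfloor>"
  shows "(\<lambda>k. of_int (dig k) / 2^Suc k) sums z"
proof -
  have fz: "\<lfloor>z\<rfloor> = 0" using z by (simp add: floor_eq_iff)
  have part: "(\<Sum>k<n. of_int (dig k) / 2^Suc k) = (of_int \<lfloor>2^n * z\<rfloor> / 2^n :: real)" for n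
  proof (induction n)
    case 0 then show ?case by (simp add: fz)
  next
    case (Suc n)
    then show ?case by (simp add: dig_def field_simps)
  qed
  have lo: "z - (1/2)^n \<le> of_int \<lfloor>2^n * z\<rfloor> / 2^n" for n :: nat
  proof -
    have "2^n * z - 1 \<le> of_int \<lfloor>2^n * z\<rfloor>" using real_of_int_floor_add_one_gt[of "2^n*z"] by linarith
    then have "(2^n * z - 1) / 2^n \<le> of_int \<lfloor>2^n * z\<rfloor> / (2::real)^n"
      by (intro divide_right_mono) simp_all
    moreover have "z - (1/2)^n = (2^n * z - 1) / (2::real)^n"
      by (simp add: power_one_over diff_divide_distrib)
    ultimately show ?thesis by simp
  qed
  have hi: "of_int \<lfloor>2^n * z\<rfloor> / 2^n \<le> z" for n :: nat
    by (simp add: field_simps)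
  have p0: "(\<lambda>n. (1/2::real)^n) \<longlonglongrightarrow> 0" by (rule LIMSEQ_power_zero) simp
  have l1: "(\<lambda>n. z - (1/2::real)^n) \<longlonglongrightarrow> z - 0" by (rule tendsto_diff[OF tendsto_const p0])
  have e1: "eventually (\<lambda>n. z - (1/2::real)^n \<le> of_int \<lfloor>2^n * z\<rfloor> / 2^n) sequentially"
    using lo by (intro always_eventually) blast
  have e2: "eventually (\<lambda>n. of_int \<lfloor>2^n * z\<rfloor> / (2::real)^n \<le> z) sequentially"
    using hi by (intro always_eventually) blast
  have "(\<lambda>n. of_int \<lfloor>2^n * z\<rfloor> / (2::real)^n) \<longlonglongrightarrow> z"
    using tendsto_sandwich[OF e1 e2] l1 by simp
  then show ?thesis unfolding sums_def part .
qed

lemma inf_diff: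
  assumes "X \<in> sets M" "emeasure M X = \<infinity>" "U \<in> sets M" "emeasure M U < \<infinity>"
  shows "emeasure M (X - U) = \<infinity>"
proof -
  have XU: "X - U \<in> sets M" using assms by auto
  have "emeasure M X \<le> emeasure M ((X - U) \<union> U)" using assms by (intro emeasure_mono) auto
  also have "\<dots> \<le> emeasure M (X - U) + emeasure M U" using XU assms by (intro emeasure_subadditive) auto
  finally have le: "\<infinity> \<le> emeasure M (X - U) + emeasure M U" using assms by simp
  show ?thesis
  proof (rule ccontr)
    assume "emeasure M (X - U) \<noteq> \<infinity>"
    then have "emeasure M (X - U) + emeasure M U \<noteq> \<infinity>" using assms(4) by (simp add: ennreal_add_eq_top)
    then show False using le by (simp add: top_unique)
  qed
qed

lemma binary_measure:
  fixes T y :: real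
  assumes T: "0 < T" and b: "\<And>n. b n \<in> sets M" "disjoint_family b"
    "\<And>n. emeasure M (b n) = ennreal (T / 2^Suc n)"
    and y: "0 \<le> y" "y < T"
  shows "\<exists>B\<in>sets M. B \<subseteq> (\<Union>n. b n) \<and> emeasure M B = ennreal y"
proof -
  define z where "z = y / T"
  have z: "0 \<le> z" "z < 1" using T y by (auto simp: z_def)
  define dig where "dig k = \<lfloor>2^Suc k * z\<rfloor> - 2*\<lfloor>2^k * z\<rfloor>" for k :: nat
  have sums: "(\<lambda>k. of_int (dig k) / 2^Suc k) sums z" unfolding dig_def by (rule binary_sums[OF z])
  have d01: "dig k = 0 \<or> dig k = 1" for k
    unfolding dig_def using floor_digit[of "2^k*z"] by (simp add: mult.assoc)
  define c where "c k = (if dig k = 1 then b k else {})" for k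
  have cs: "c k \<in> sets M" for k using b by (simp add: c_def)
  have cd: "disjoint_family c" using b(2) unfolding disjoint_family_on_def c_def by auto
  have cm: "emeasure M (c k) = ennreal (T * (of_int (dig k) / 2^Suc k))" for k
    using d01[of k] b(3)[of k] by (auto simp: c_def)
  have "(\<lambda>k. T * (of_int (dig k) / 2^Suc k)) sums (T * z)" by (rule sums_mult[OF sums])
  moreover have nn: "0 \<le> T * (of_int (dig k) / 2^Suc k)" for k using d01[of k] T by auto
  ultimately have "(\<Sum>k. ennreal (T * (of_int (dig k) / 2^Suc k))) = ennreal (T * z)"
    by (intro suminf_ennreal_eq) auto
  moreover have "(\<Sum>k. emeasure M (c k)) = emeasure M (\<Union>k. c k)"
    using cs cd by (intro suminf_emeasure) auto
  ultimately have "emeasure M (\<Union>k. c k) = ennreal y" using T by (simp add: cm z_def)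
  moreover have "(\<Union>k. c k) \<subseteq> (\<Union>n. b n)" by (auto simp: c_def split: if_splits)
  moreover have "(\<Union>k. c k) \<in> sets M" using cs by auto
  ultimately show ?thesis by blast
qed

theorem lemma3p1:
  fixes M :: "'a measure"
  assumes "sigma_finite_measure M"
    and "purely_atomic M"
    and "order_interval (measure_range M)"
    and "\<And>\<epsilon> F. \<epsilon> > 0 \<Longrightarrow> countable F \<Longrightarrow> F \<subseteq> {A. atom M A \<and> emeasure M A > \<epsilon>}
           \<Longrightarrow> emeasure M (\<Union>F) < \<infinity>"
    and "t < emeasure M (space M)"
  shows "\<exists>C \<in> sets M. emeasure M C \<ge> t \<and> order_interval (restr_range M C)
           \<and> (\<forall>r \<in> restr_range M C. r < \<infinity>)"
proof (cases "emeasure M (space M) < \<infinity>")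
  case True
  have rr: "restr_range M (space M) = measure_range M"
    unfolding restr_range_def measure_range_def
    by (intro image_cong refl) (simp add: Int_absorb2 sets.sets_into_space)
  have "\<forall>r \<in> restr_range M (space M). r < \<infinity>"
    unfolding rr measure_range_def using True
    by (auto intro: le_less_trans[OF emeasure_space])
  then show ?thesis using assms(3,5) rr by (intro bexI[of _ "space M"]) auto
next
  case False
  note sf = assms(1) and H4 = assms(4)
  have inf: "emeasure M (space M) = \<infinity>" using False by (metis less_top infinity_ennreal_def)
  have tfin: "t < \<infinity>" using assms(5) inf by simp
  define T where "T = enn2real t"
  have tT: "t = ennreal T" and T0: "T \<ge> 0" using tfin by (auto simp: T_def less_top ennreal_enn2real_if)
  define P where "P n V B \<longleftrightarrow> B \<in> sets M \<and> B \<subseteq> space M - V \<and> emeasure M B = ennreal (T / 2^Suc n)"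
    for n V B
  define pick where "pick n V = (SOME B. P n V B)" for n V
  have ex: "\<exists>B. P n V B" if "V \<in> sets M" "emeasure M V < \<infinity>" for n V
  proof -
    have "emeasure M (space M - V) = \<infinity>" using inf that by (intro inf_diff) auto
    then have "\<exists>B\<in>sets M. B \<subseteq> space M - V \<and> emeasure M B = ennreal (T / 2^Suc n)"
      using that by (intro realize[OF sf H4]) auto
    then show ?thesis unfolding P_def by blast
  qed
  define Vs where "Vs = rec_nat {} (\<lambda>n V. V \<union> pick n V)"
  have V0: "Vs 0 = {}" and VS: "Vs (Suc n) = Vs n \<union> pick n (Vs n)" for n by (simp_all add: Vs_def)
  define b where "b n = pick n (Vs n)" for n
  have inv: "Vs n \<in> sets M \<and> emeasure M (Vs n) < \<infinity> \<and> P n (Vs n) (b n)" for n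
  proof (induction n)
    case 0
    have "P 0 (Vs 0) (b 0)" unfolding b_def pick_def by (rule someI_ex) (rule ex, simp_all add: V0)
    then show ?case by (simp add: V0)
  next
    case (Suc n)
    have Pn: "P n (Vs n) (b n)" using Suc by blast
    have bs: "b n \<in> sets M" "emeasure M (b n) < \<infinity>" using Pn by (auto simp: P_def)
    have s: "Vs (Suc n) \<in> sets M" using Suc bs unfolding VS b_def[symmetric] by (intro sets.Un) auto
    have "emeasure M (Vs (Suc n)) \<le> emeasure M (Vs n) + emeasure M (b n)"
      unfolding VS b_def[symmetric] using Suc bs by (intro emeasure_subadditive) auto
    also have "\<dots> < \<infinity>" using Suc bs by (simp add: ennreal_add_less_top)
    finally have f: "emeasure M (Vs (Suc n)) < \<infinity>" .
    have "P (Suc n) (Vs (Suc n)) (b (Suc n))" unfolding b_def pick_def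
      by (rule someI_ex) (rule ex[OF s f])
    then show ?case using s f by blast
  qed
  have bP: "b n \<in> sets M" "b n \<subseteq> space M - Vs n" "emeasure M (b n) = ennreal (T / 2^Suc n)" for n
    using inv[of n] by (auto simp: P_def)
  have Vs_eq: "Vs n = (\<Union>k<n. b k)" for n
    by (induction n) (auto simp: V0 VS b_def lessThan_Suc)
  have disj: "disjoint_family b"
    unfolding disjoint_family_on_def
  proof (intro ballI impI)
    fix m n :: nat assume "m \<noteq> n"
    then consider "m < n" | "n < m" by linarith
    then show "b m \<inter> b n = {}"
    proof cases
      case 1 then have "b m \<subseteq> Vs n" using Vs_eq[of n] by auto
      then show ?thesis using bP(2)[of n] by auto
    next
      case 2 then have "b n \<subseteq> Vs m" using Vs_eq[of m] by auto
      then show ?thesis using bP(2)[of m] by auto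
    qed
  qed
  define C where "C = (\<Union>n. b n)"
  have Cs: "C \<in> sets M" unfolding C_def using bP(1) by auto
  have geo: "(\<lambda>n. T / 2^Suc n) sums T"
  proof -
    have "(\<lambda>n. T * (1/2::real)^Suc n) sums (T * 1)" by (rule sums_mult[OF power_half_series])
    then show ?thesis by (simp add: power_one_over)
  qed
  have "(\<Sum>n. emeasure M (b n)) = emeasure M C"
    unfolding C_def using bP(1) disj by (intro suminf_emeasure) auto
  moreover have "(\<Sum>n. ennreal (T / 2^Suc n)) = ennreal T"
    using geo T0 by (intro suminf_ennreal_eq) auto
  ultimately have muC: "emeasure M C = ennreal T" by (simp add: bP(3))
  have fin: "\<forall>r \<in> restr_range M C. r < \<infinity>"
  proof
    fix r assume "r \<in> restr_range M C"
    then obtain A where A: "A \<in> sets M" "r = emeasure M (A \<inter> C)" by (auto simp: restr_range_def)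
    have "emeasure M (A \<inter> C) \<le> emeasure M C" using A Cs by (intro emeasure_mono) auto
    then show "r < \<infinity>" using A muC by (simp add: le_less_trans)
  qed
  have oi: "order_interval (restr_range M C)"
    unfolding order_interval_def
  proof (intro ballI allI impI)
    fix p q y assume p: "p \<in> restr_range M C" and q: "q \<in> restr_range M C" and y: "p \<le> y \<and> y \<le> q"
    obtain A where A: "A \<in> sets M" "q = emeasure M (A \<inter> C)" using q by (auto simp: restr_range_def)
    have "q \<le> emeasure M C" using A Cs by (auto intro: emeasure_mono)
    then have yT: "y \<le> ennreal T" using y muC by (metis order.trans)
    then obtain y' where y': "y = ennreal y'" "0 \<le> y'" "y' \<le> T"
      using T0 yT by (cases y) (auto simp: ennreal_le_iff top_unique)
    have "\<exists>B\<in>sets M. B \<subseteq> C \<and> emeasure M B = y"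
    proof (cases "y' = T")
      case True then show ?thesis using Cs muC y' by blast
    next
      case False
      then have "y' < T" using y' by simp
      then have T0': "0 < T" using y' by simp
      show ?thesis unfolding C_def y'(1)
        by (rule binary_measure[OF T0' bP(1) disj bP(3) y'(2) \<open>y' < T\<close>])
    qed
    then obtain B where B: "B \<in> sets M" "B \<subseteq> C" "emeasure M B = y" by blast
    have "y = emeasure M (B \<inter> C)" using B by (simp add: Int_absorb2)
    then show "y \<in> restr_range M C" unfolding restr_range_def using B by blast
  qed
  show ?thesis using Cs muC tT oi fin by (intro bexI[of _ C]) auto
qed

end
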